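(* Let $G$ be a finite, connected game board in which every edge is marked with an arrow and there are no sinks and no sources. Then $G$ contains a cycle cell.
   Context: A board is a simple connected planar graph embedded in the plane, together with its bounded cells (bounded faces). An edge marked with an arrow is oriented in one of its two directions. A sink is a vertex all of whose incident edges are marked with arrows pointing toward it; a source is a vertex all of whose incident edges are marked with arrows pointing away from it. A cycle cell is a bounded cell all of whose boundary edges are marked with arrows all cycling in the same direction (all clockwise or all counterclockwise) around that cell. *)

theory Defs
  imports Main
begin

(* Combinatorial model of a board (a simple connected plane graph with its
   bounded cells), via a rotation system (combinatorial map) of genus 0.

   V       : vertex set
   E       : set of darts (ordered pairs (u,w) = edge uw seen from u);
             an undirected edge {u,w} is the pair of darts (u,w),(w,u)
   rot     : rotation system: cyclic order of the darts around each vertex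
             (the order in which they appear around the vertex in the plane)
   outer   : a dart of the unbounded cell
   faces are the orbits of the face permutation  d \<mapsto> rot (rev d). *)

definition rev_dart :: "'v \<times> 'v \<Rightarrow> 'v \<times> 'v" where
  "rev_dart d = (snd d, fst d)"

definition simple_graph :: "'v set \<Rightarrow> ('v \<times> 'v) set \<Rightarrow> bool" where
  "simple_graph V E \<longleftrightarrow> finite V \<and> E \<subseteq> V \<times> V
     \<and> (\<forall>u w. (u, w) \<in> E \<longrightarrow> (w, u) \<in> E \<and> u \<noteq> w)"

definition connected_graph :: "'v set \<Rightarrow> ('v \<times> 'v) set \<Rightarrow> bool" where
  "connected_graph V E \<longleftrightarrow> V \<noteq> {} \<and> (\<forall>u\<in>V. \<forall>w\<in>V. (u, w) \<in> E\<^sup>*)"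

definition orbit :: "('d \<Rightarrow> 'd) \<Rightarrow> 'd \<Rightarrow> 'd set" where
  "orbit f d = {(f ^^ n) d | n. True}"

definition rotation_system :: "('v \<times> 'v) set \<Rightarrow> ('v \<times> 'v \<Rightarrow> 'v \<times> 'v) \<Rightarrow> bool" where
  "rotation_system E rot \<longleftrightarrow> bij_betw rot E E
     \<and> (\<forall>d\<in>E. fst (rot d) = fst d \<and> orbit rot d = {d'\<in>E. fst d' = fst d})"

definition face_perm :: "('v \<times> 'v \<Rightarrow> 'v \<times> 'v) \<Rightarrow> 'v \<times> 'v \<Rightarrow> 'v \<times> 'v" where
  "face_perm rot d = rot (rev_dart d)"

(* cells (faces) of the map: orbits of the face permutation; each is the set
   of darts traversed by the boundary walk of the cell, in one fixed
   rotational sense *)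
definition faces :: "('v \<times> 'v) set \<Rightarrow> ('v \<times> 'v \<Rightarrow> 'v \<times> 'v) \<Rightarrow> ('v \<times> 'v) set set" where
  "faces E rot = orbit (face_perm rot) ` E"

(* the map is planar (genus 0): Euler's formula V - E + F = 2 *)
definition planar_map :: "'v set \<Rightarrow> ('v \<times> 'v) set \<Rightarrow> ('v \<times> 'v \<Rightarrow> 'v \<times> 'v) \<Rightarrow> bool" where
  "planar_map V E rot \<longleftrightarrow> rotation_system E rot
     \<and> (E = {} \<or> int (card V) - int (card E div 2) + int (card (faces E rot)) = 2)"

definition board :: "'v set \<Rightarrow> ('v \<times> 'v) set \<Rightarrow> ('v \<times> 'v \<Rightarrow> 'v \<times> 'v) \<Rightarrow> 'v \<times> 'v \<Rightarrow> bool" where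
  "board V E rot outer \<longleftrightarrow> simple_graph V E \<and> connected_graph V E
     \<and> planar_map V E rot \<and> (E \<noteq> {} \<longrightarrow> outer \<in> E)"

definition bounded_cells :: "('v \<times> 'v) set \<Rightarrow> ('v \<times> 'v \<Rightarrow> 'v \<times> 'v) \<Rightarrow> 'v \<times> 'v \<Rightarrow> ('v \<times> 'v) set set" where
  "bounded_cells E rot outer = faces E rot - {orbit (face_perm rot) outer}"

(* arrow marking: A is the set of darts (u,w) whose edge carries an arrow
   pointing from u to w; every edge is marked, in exactly one direction *)
definition all_marked :: "('v \<times> 'v) set \<Rightarrow> ('v \<times> 'v) set \<Rightarrow> bool" where
  "all_marked E A \<longleftrightarrow> A \<subseteq> E \<and> (\<forall>d\<in>E. (d \<in> A) \<noteq> (rev_dart d \<in> A))"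

definition is_sink :: "('v \<times> 'v) set \<Rightarrow> ('v \<times> 'v) set \<Rightarrow> 'v \<Rightarrow> bool" where
  "is_sink E A v \<longleftrightarrow> (\<forall>w. (v, w) \<in> E \<longrightarrow> (w, v) \<in> A)"

definition is_source :: "('v \<times> 'v) set \<Rightarrow> ('v \<times> 'v) set \<Rightarrow> 'v \<Rightarrow> bool" where
  "is_source E A v \<longleftrightarrow> (\<forall>w. (v, w) \<in> E \<longrightarrow> (v, w) \<in> A)"

(* a cycle cell: all boundary edges point along the boundary walk in the same
   rotational sense (either all along it, or all against it) *)
definition cycle_cell :: "('v \<times> 'v) set \<Rightarrow> ('v \<times> 'v) set \<Rightarrow> bool" where
  "cycle_cell A C \<longleftrightarrow> (\<forall>d\<in>C. d \<in> A) \<or> (\<forall>d\<in>C. rev_dart d \<in> A)"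

end

theory Submission
  imports Defs
begin

lemma funpow_in:
  assumes "f ` E \<subseteq> E" "x \<in> E" shows "(f ^^ n) x \<in> E"
  using assms by (induction n) auto

lemma funpow_cancel:
  assumes "inj_on f E" "f ` E \<subseteq> E" "a \<in> E" "b \<in> E" "(f ^^ i) a = (f ^^ i) b"
  shows "a = b"
  using assms(5)
proof (induction i)
  case 0 then show ?case by simp
next
  case (Suc i)
  have "f ((f ^^ i) a) = f ((f ^^ i) b)" using Suc.prems by simp
  then have "(f ^^ i) a = (f ^^ i) b"
    using assms(1) funpow_in[OF assms(2) assms(3)] funpow_in[OF assms(2) assms(4)]
    by (meson inj_onD)
  then show ?case using Suc.IH by blast
qed

lemma periodic:
  assumes "finite E" "inj_on f E" "f ` E \<subseteq> E" "x \<in> E"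
  shows "\<exists>p>0. (f ^^ p) x = x"
proof -
  let ?g = "\<lambda>i. (f ^^ i) x"
  have "?g ` {0..card E} \<subseteq> E" using funpow_in[OF assms(3,4)] by auto
  then have "card (?g ` {0..card E}) \<le> card E" using assms(1) card_mono by blast
  then have "\<not> inj_on ?g {0..card E}"
    using card_image by fastforce
  then obtain i j where ij: "i \<in> {0..card E}" "j \<in> {0..card E}" "i \<noteq> j" "?g i = ?g j"
    unfolding inj_on_def by blast
  have gen: "\<exists>p>0. (f ^^ p) x = x" if "i < j" "(f ^^ i) x = (f ^^ j) x" for i j
  proof -
    have "(f ^^ j) x = (f ^^ i) ((f ^^ (j - i)) x)"
      using that(1) by (metis funpow_add le_add_diff_inverse less_imp_le o_apply)
    then have "(f ^^ i) x = (f ^^ i) ((f ^^ (j - i)) x)" using that(2) by simp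
    then have "x = (f ^^ (j - i)) x"
      using funpow_cancel[OF assms(2,3) assms(4) funpow_in[OF assms(3,4)]] by blast
    then show ?thesis using that(1) by (intro exI[of _ "j - i"]) auto
  qed
  show ?thesis
  proof (cases "i < j")
    case True then show ?thesis using gen ij(4) by blast
  next
    case False then have "j < i" using ij(3) by simp
    then show ?thesis using gen ij(4) by metis
  qed
qed

lemma funpow_mult_fix:
  assumes "(f ^^ p) x = x" shows "(f ^^ (p * m)) x = x"
proof (induction m)
  case 0 then show ?case by simp
next
  case (Suc m)
  have "(f ^^ (p * Suc m)) x = (f ^^ p) ((f ^^ (p * m)) x)"
    by (simp add: funpow_add)
  then show ?case using assms Suc.IH by simp
qed

lemma orbit_reach:
  assumes "finite E" "inj_on f E" "f ` E \<subseteq> E" "x \<in> E"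
    and "a \<in> orbit f x" "b \<in> orbit f x"
  shows "\<exists>n. b = (f ^^ n) a"
proof -
  obtain p where p: "p > 0" "(f ^^ p) x = x" using periodic[OF assms(1-4)] by blast
  obtain i where i: "a = (f ^^ i) x" using assms(5) unfolding orbit_def by blast
  obtain j where j: "b = (f ^^ j) x" using assms(6) unfolding orbit_def by blast
  have "(f ^^ (j + p * i - i)) a = (f ^^ (j + p * i - i + i)) x"
    using i by (simp add: funpow_add)
  also have "j + p * i - i + i = j + p * i"
  proof -
    have "i \<le> p * i" using p(1) by simp
    then show ?thesis by linarith
  qed
  also have "(f ^^ (j + p * i)) x = (f ^^ j) ((f ^^ (p * i)) x)" by (simp add: funpow_add)
  also have "\<dots> = b" using funpow_mult_fix[OF p(2)] j by simp
  finally show ?thesis by metis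
qed

lemma orbit_eq:
  assumes "finite E" "inj_on f E" "f ` E \<subseteq> E" "x \<in> E" "y \<in> orbit f x"
  shows "orbit f y = orbit f x"
proof
  obtain i where i: "y = (f ^^ i) x" using assms(5) unfolding orbit_def by blast
  show "orbit f y \<subseteq> orbit f x"
  proof
    fix z assume "z \<in> orbit f y"
    then obtain n where "z = (f ^^ n) y" unfolding orbit_def by blast
    then have "z = (f ^^ (n + i)) x" using i by (simp add: funpow_add)
    then show "z \<in> orbit f x" unfolding orbit_def by blast
  qed
  show "orbit f x \<subseteq> orbit f y"
  proof
    fix z assume "z \<in> orbit f x"
    then obtain n where "z = (f ^^ n) y" using orbit_reach[OF assms(1-4) assms(5)] by blast
    then show "z \<in> orbit f y" unfolding orbit_def by blast
  qed
qed

lemma step_switch: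
  assumes "a \<in> A" "(f ^^ n) a \<notin> A"
  shows "\<exists>k<n. (f ^^ k) a \<in> A \<and> f ((f ^^ k) a) \<notin> A"
  using assms(2)
proof (induction n)
  case 0 then show ?case using assms(1) by simp
next
  case (Suc n)
  show ?case
  proof (cases "(f ^^ n) a \<in> A")
    case True then show ?thesis using Suc.prems by (intro exI[of _ n]) auto
  next
    case False then show ?thesis using Suc.IH less_Suc_eq by blast
  qed
qed

lemma orbit_funpow_mem:
  assumes "a \<in> orbit f x" shows "(f ^^ k) a \<in> orbit f x"
proof -
  obtain i where "a = (f ^^ i) x" using assms unfolding orbit_def by blast
  then have "(f ^^ k) a = (f ^^ (k + i)) x" by (simp add: funpow_add)
  then show ?thesis unfolding orbit_def by blast
qed

lemma orbit_sub:
  assumes "f ` E \<subseteq> E" "x \<in> E" shows "orbit f x \<subseteq> E"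
  using funpow_in[OF assms] unfolding orbit_def by blast

lemma two_switch:
  assumes "finite E" "inj_on f E" "f ` E \<subseteq> E" "x \<in> E"
    and "a \<in> orbit f x" "b \<in> orbit f x" "a \<in> A" "b \<notin> A"
  shows "2 \<le> card {s \<in> orbit f x. (s \<in> A) \<noteq> (f s \<in> A)}"
proof -
  obtain n where n: "b = (f ^^ n) a" using orbit_reach[OF assms(1-4,5,6)] by blast
  obtain m where m: "a = (f ^^ m) b" using orbit_reach[OF assms(1-4,6,5)] by blast
  obtain k where k: "(f ^^ k) a \<in> A" "f ((f ^^ k) a) \<notin> A"
    using step_switch[where a=a and A=A and f=f and n=n] assms(7,8) n by blast
  obtain l where l: "(f ^^ l) b \<notin> A" "f ((f ^^ l) b) \<in> A"
    using step_switch[where a=b and A="- A" and f=f and n=m] assms(7,8) m by auto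
  let ?S = "{s \<in> orbit f x. (s \<in> A) \<noteq> (f s \<in> A)}"
  have "{(f ^^ k) a, (f ^^ l) b} \<subseteq> ?S"
    using k l orbit_funpow_mem[OF assms(5)] orbit_funpow_mem[OF assms(6)] by auto
  moreover have "finite ?S" using orbit_sub[OF assms(3,4)] assms(1)
    by (metis (no_types, lifting) finite_subset mem_Collect_eq subsetI subset_iff)
  moreover have "(f ^^ k) a \<noteq> (f ^^ l) b" using k l by auto
  ultimately show ?thesis
    by (metis card_2_iff card_mono)
qed

theorem theorem6p1:
  fixes V :: "'v set" and E :: "('v \<times> 'v) set"
    and rot :: "'v \<times> 'v \<Rightarrow> 'v \<times> 'v" and outer :: "'v \<times> 'v"
    and A :: "('v \<times> 'v) set"
  assumes "board V E rot outer"
    and "all_marked E A"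
    and "\<forall>v\<in>V. \<not> is_sink E A v"
    and "\<forall>v\<in>V. \<not> is_source E A v"
  shows "\<exists>C\<in>bounded_cells E rot outer. cycle_cell A C"
proof (rule ccontr)
  assume nc: "\<not> ?thesis"
  have sg: "simple_graph V E" and cg: "connected_graph V E" and pm: "planar_map V E rot"
    and oE: "E \<noteq> {} \<longrightarrow> outer \<in> E"
    using assms(1) unfolding board_def by auto
  have finV: "finite V" and EV: "E \<subseteq> V \<times> V"
    and revE: "\<And>u w. (u, w) \<in> E \<Longrightarrow> (w, u) \<in> E"
    using sg unfolding simple_graph_def by auto
  have finE: "finite E" using finV EV finite_subset by blast
  have rs: "rotation_system E rot" using pm unfolding planar_map_def by auto
  have rbij: "bij_betw rot E E" and rorb: "\<And>d. d \<in> E \<Longrightarrow> orbit rot d = {d'\<in>E. fst d' = fst d}"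
    using rs unfolding rotation_system_def by auto
  have rinj: "inj_on rot E" and rimg: "rot ` E \<subseteq> E"
    using rbij by (auto simp: bij_betw_def)
  have AE: "A \<subseteq> E" and mk: "\<And>d. d \<in> E \<Longrightarrow> (d \<in> A) \<noteq> (rev_dart d \<in> A)"
    using assms(2) unfolding all_marked_def by auto
  have revdE: "\<And>d. d \<in> E \<Longrightarrow> rev_dart d \<in> E"
    using revE unfolding rev_dart_def by (metis prod.collapse)
  have revrev: "\<And>d. rev_dart (rev_dart d) = d" unfolding rev_dart_def by simp
  have revinj: "inj rev_dart" by (metis injI revrev)
  let ?fp = "face_perm rot"
  have fimg: "?fp ` E \<subseteq> E" using rimg revdE unfolding face_perm_def by auto
  have finj: "inj_on ?fp E"
  proof (rule inj_onI)
    fix x y assume "x \<in> E" "y \<in> E" "?fp x = ?fp y"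
    then have "rev_dart x = rev_dart y" using rinj revdE unfolding face_perm_def
      by (meson inj_onD)
    then show "x = y" by (metis revrev)
  qed
  obtain v0 where v0: "v0 \<in> V" using cg unfolding connected_graph_def by auto
  have Ene: "E \<noteq> {}" using assms(3) v0 unfolding is_sink_def by auto
  then have outE: "outer \<in> E" using oE by simp
  have euler: "int (card V) - int (card E div 2) + int (card (faces E rot)) = 2"
    using pm Ene unfolding planar_map_def by auto
  define S where "S = {x\<in>E. (x\<in>A) \<noteq> (rot x \<in> A)}"
  define Ch where "Ch = {d\<in>E. (d\<in>A) \<noteq> (?fp d \<in> A)}"
  have finS: "finite S" and finCh: "finite Ch" using finE unfolding S_def Ch_def by auto
  have ES: "E - S = rev_dart ` Ch"
  proof
    show "E - S \<subseteq> rev_dart ` Ch"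
    proof
      fix x assume x: "x \<in> E - S"
      have "rev_dart x \<in> Ch" using x mk[of x] revdE[of x] revrev[of x]
        unfolding S_def Ch_def face_perm_def by auto
      then show "x \<in> rev_dart ` Ch" by (metis image_eqI revrev)
    qed
    show "rev_dart ` Ch \<subseteq> E - S"
    proof
      fix x assume "x \<in> rev_dart ` Ch"
      then obtain d where d: "d \<in> Ch" "x = rev_dart d" by blast
      then have dE: "d \<in> E" unfolding Ch_def by auto
      then have "x \<in> E" using d revdE by simp
      then show "x \<in> E - S" using d dE mk[of d] revrev[of d]
        unfolding S_def Ch_def face_perm_def by auto
    qed
  qed
  have cardE: "card E = card S + card Ch"
  proof -
    have "S \<subseteq> E" unfolding S_def by auto
    then have "card E = card S + card (E - S)"
      using finE by (metis card_Diff_subset card_mono finite_subset le_add_diff_inverse)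
    also have "card (E - S) = card Ch" using ES card_image revinj
      by (metis inj_on_subset subset_UNIV)
    finally show ?thesis .
  qed
  have Sv: "2 \<le> card {x\<in>S. fst x = v}" if v: "v \<in> V" for v
  proof -
    obtain w where w: "(v, w) \<in> E" "(w, v) \<notin> A" using assms(3) v unfolding is_sink_def by auto
    obtain w' where w': "(v, w') \<in> E" "(v, w') \<notin> A" using assms(4) v unfolding is_source_def by auto
    have wA: "(v, w) \<in> A" using mk[OF w(1)] w(2) unfolding rev_dart_def by auto
    have o: "orbit rot (v, w) = {d'\<in>E. fst d' = v}" using rorb[OF w(1)] by simp
    have "2 \<le> card {s \<in> orbit rot (v, w). (s \<in> A) \<noteq> (rot s \<in> A)}"
      by (rule two_switch[OF finE rinj rimg w(1), of "(v,w)" "(v,w')"]) (use o w w' wA in auto)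
    also have "{s \<in> orbit rot (v, w). (s \<in> A) \<noteq> (rot s \<in> A)} = {x\<in>S. fst x = v}"
      using o unfolding S_def by auto
    finally show ?thesis .
  qed
  have SU: "S = (\<Union>v\<in>V. {x\<in>S. fst x = v})" using EV unfolding S_def by auto
  have "card S = (\<Sum>v\<in>V. card {x\<in>S. fst x = v})"
    by (subst SU, rule card_UN_disjoint) (use finV finS in auto)
  also have "\<dots> \<ge> of_nat (card V) * 2" by (rule sum_bounded_below) (rule Sv)
  finally have cS: "2 * card V \<le> card S" by simp
  have finF: "finite (faces E rot)" using finE unfolding faces_def by auto
  have disjF: "F1 \<inter> F2 = {}" if FF: "F1 \<in> faces E rot" "F2 \<in> faces E rot" "F1 \<noteq> F2" for F1 F2
  proof (rule ccontr)
    assume "F1 \<inter> F2 \<noteq> {}"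
    then obtain y where y: "y \<in> F1" "y \<in> F2" by blast
    obtain x1 where x1: "x1 \<in> E" "F1 = orbit ?fp x1" using FF(1) unfolding faces_def by auto
    obtain x2 where x2: "x2 \<in> E" "F2 = orbit ?fp x2" using FF(2) unfolding faces_def by auto
    have "orbit ?fp y = F1" using orbit_eq[OF finE finj fimg x1(1)] y x1 by simp
    moreover have "orbit ?fp y = F2" using orbit_eq[OF finE finj fimg x2(1)] y x2 by simp
    ultimately show False using FF(3) by simp
  qed
  have ChU: "Ch = (\<Union>F\<in>faces E rot. Ch \<inter> F)"
  proof -
    have "d \<in> orbit ?fp d" for d unfolding orbit_def by (metis (mono_tags, lifting) funpow_0 mem_Collect_eq)
    then show ?thesis unfolding faces_def Ch_def by auto
  qed
  have "card Ch = (\<Sum>F\<in>faces E rot. card (Ch \<inter> F))"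
    by (subst ChU, rule card_UN_disjoint) (use finF finCh disjF in auto)
  also have "\<dots> \<ge> (\<Sum>F\<in>bounded_cells E rot outer. card (Ch \<inter> F))"
    by (rule sum_mono2) (use finF in \<open>auto simp: bounded_cells_def\<close>)
  moreover have "(\<Sum>F\<in>bounded_cells E rot outer. card (Ch \<inter> F)) \<ge> of_nat (card (bounded_cells E rot outer)) * 2"
  proof (rule sum_bounded_below)
    fix F assume F: "F \<in> bounded_cells E rot outer"
    then have ncc: "\<not> cycle_cell A F" using nc by auto
    obtain x where x: "x \<in> E" "F = orbit ?fp x" using F unfolding bounded_cells_def faces_def by auto
    have FE: "F \<subseteq> E" using orbit_sub[OF fimg x(1)] x by simp
    obtain b where b: "b \<in> F" "b \<notin> A" using ncc unfolding cycle_cell_def by auto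
    obtain a where a: "a \<in> F" "rev_dart a \<notin> A" using ncc unfolding cycle_cell_def by auto
    have aA: "a \<in> A" using a FE mk[of a] by blast
    have "2 \<le> card {s \<in> orbit ?fp x. (s \<in> A) \<noteq> (?fp s \<in> A)}"
      by (rule two_switch[OF finE finj fimg x(1), of a b]) (use a b aA x in auto)
    also have "{s \<in> orbit ?fp x. (s \<in> A) \<noteq> (?fp s \<in> A)} = Ch \<inter> F"
      using FE x unfolding Ch_def by auto
    finally show "2 \<le> card (Ch \<inter> F)" .
  qed
  ultimately have cCh: "2 * card (bounded_cells E rot outer) \<le> card Ch" by simp
  have oF: "orbit ?fp outer \<in> faces E rot" using outE unfolding faces_def by auto
  have cb: "card (bounded_cells E rot outer) = card (faces E rot) - 1"
    unfolding bounded_cells_def by (rule card_Diff_singleton[OF oF])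
  have Fpos: "card (faces E rot) \<ge> 1"
  proof -
    have "faces E rot \<noteq> {}" using oF by blast
    then have "card (faces E rot) > 0" using finF by (simp add: card_gt_0_iff)
    then show ?thesis by simp
  qed
  have "2 * card V + 2 * (card (faces E rot) - 1) \<le> card E" using cS cCh cb cardE by linarith
  moreover have "2 * (card E div 2) \<le> card E" by simp
  ultimately show False using euler Fpos by linarith
qed

end
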